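(* For every positive integer $n$, the Wiener indices of the polyphenyl ortho-chain $\overline{O}_n$, the polyphenyl meta-chain $\overline{M}_n$ and the polyphenyl para-chain $\overline{P}_n$ are $$W(\overline{O}_n)=12n^3+36n^2-21n,\quad W(\overline{M}_n)=18n^3+18n^2-9n,\quad W(\overline{P}_n)=24n^3+3n.$$
   Context: The Wiener index is $W(G)=\sum_{\{u,v\}\subseteq V(G)}d_G(u,v)$, $d_G$ the shortest-path distance. A polyphenyl hexagonal chain $\overline{G}_n=\overline{H}_0\cdots\overline{H}_{n-1}$ of length $n$ consists of pairwise vertex-disjoint hexagons $\overline{H}_0,\dots,\overline{H}_{n-1}$ together with cut-edges: $\overline{G}_1=\overline{H}_0$, and for $k\ge1$, $\overline{G}_{k+1}$ is obtained from $\overline{G}_k$ by adding $\overline{H}_k$ and a cut-edge joining a vertex $c_k$ of $\overline{H}_k$ to a vertex $t_k$ of $\overline{H}_{k-1}$, where for $k\ge2$, $t_k\ne c_{k-1}$. For $k\ge1$, vertices of $\overline{H}_k$ at distance $1,2,3$ from $c_k$ are denoted $o_k,m_k,p_k$ (ortho, meta, para). The polyphenyl ortho-chain $\overline{O}_n$ has $t_k=o_{k-1}$ for all $2\le k\le n-1$; the polyphenyl meta-chain $\overline{M}_n$ has $t_k=m_{k-1}$ and the polyphenyl para-chain $\overline{P}_n$ has $t_k=p_{k-1}$ for all $2\le k\le n-1$ (vacuous for $n\le2$). *)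

theory Defs
  imports Main
begin

text \<open>Vertex v < 6*n lies in hexagon H_(v div 6) at cyclic position v mod 6
  (positions 0..5 in cyclic order around the hexagon).
  For 1 <= k < n, c k is the position of c_k in H_k and t k is the position
  of t_k in H_(k-1); the cut-edge joins 6*(k-1) + t k and 6*k + c k.\<close>

definition hex_vertices :: "nat \<Rightarrow> nat set" where
  "hex_vertices n = {..<6*n}"

definition chain_adj :: "nat \<Rightarrow> (nat \<Rightarrow> nat) \<Rightarrow> (nat \<Rightarrow> nat) \<Rightarrow> nat \<Rightarrow> nat \<Rightarrow> bool" where
  "chain_adj n c t u v \<longleftrightarrow> u < 6*n \<and> v < 6*n \<and>
     ((u div 6 = v div 6 \<and> (u mod 6 = Suc (v mod 6) mod 6 \<or> v mod 6 = Suc (u mod 6) mod 6))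
      \<or> (\<exists>k. 1 \<le> k \<and> k < n \<and> {u, v} = {6*(k-1) + t k, 6*k + c k}))"

definition is_walk :: "('a \<Rightarrow> 'a \<Rightarrow> bool) \<Rightarrow> 'a list \<Rightarrow> 'a \<Rightarrow> 'a \<Rightarrow> bool" where
  "is_walk adj p u v \<longleftrightarrow> p \<noteq> [] \<and> hd p = u \<and> last p = v \<and>
     (\<forall>i. Suc i < length p \<longrightarrow> adj (p ! i) (p ! Suc i))"

definition graph_dist :: "('a \<Rightarrow> 'a \<Rightarrow> bool) \<Rightarrow> 'a \<Rightarrow> 'a \<Rightarrow> nat" where
  "graph_dist adj u v = (LEAST m. \<exists>p. is_walk adj p u v \<and> length p = Suc m)"

definition wiener :: "nat \<Rightarrow> (nat \<Rightarrow> nat) \<Rightarrow> (nat \<Rightarrow> nat) \<Rightarrow> nat" where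
  "wiener n c t = (\<Sum>(u, v) \<in> {(u, v). u < v \<and> v < 6*n}. graph_dist (chain_adj n c t) u v)"

definition hex_pos_dist :: "nat \<Rightarrow> nat \<Rightarrow> nat" where
  "hex_pos_dist i j = min ((i + 6 - j) mod 6) ((j + 6 - i) mod 6)"

definition valid_chain :: "nat \<Rightarrow> (nat \<Rightarrow> nat) \<Rightarrow> (nat \<Rightarrow> nat) \<Rightarrow> bool" where
  "valid_chain n c t \<longleftrightarrow> (\<forall>k. 1 \<le> k \<and> k < n \<longrightarrow> c k < 6 \<and> t k < 6) \<and>
     (\<forall>k. 2 \<le> k \<and> k < n \<longrightarrow> t k \<noteq> c (k-1))"

text \<open>t_k is at hexagon distance d from c_(k-1) for all 2 <= k <= n-1
  (d = 1 ortho, d = 2 meta, d = 3 para).\<close>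

definition chain_type :: "nat \<Rightarrow> nat \<Rightarrow> (nat \<Rightarrow> nat) \<Rightarrow> (nat \<Rightarrow> nat) \<Rightarrow> bool" where
  "chain_type d n c t \<longleftrightarrow> (\<forall>k. 2 \<le> k \<and> k < n \<longrightarrow> hex_pos_dist (t k) (c (k-1)) = d)"

end

theory Submission
  imports Defs
begin


lemma six_cases: "(x::nat) < 6 \<Longrightarrow> x = 0 \<or> x = 1 \<or> x = 2 \<or> x = 3 \<or> x = 4 \<or> x = 5" by auto

lemma ex6: "(\<exists>z<6. P z) \<longleftrightarrow> P 0 \<or> P 1 \<or> P 2 \<or> P 3 \<or> P 4 \<or> P (5::nat)"
proof
  assume "\<exists>z<6. P z"
  then obtain z where "z < 6" "P z" by blast
  thus "P 0 \<or> P 1 \<or> P 2 \<or> P 3 \<or> P 4 \<or> P (5::nat)" using six_cases[of z] by auto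
next
  assume "P 0 \<or> P 1 \<or> P 2 \<or> P 3 \<or> P 4 \<or> P (5::nat)"
  thus "\<exists>z<6. P z" apply (elim disjE)
    apply (rule exI[of _ 0]; simp)
    apply (rule exI[of _ 1]; simp)
    apply (rule exI[of _ 2]; simp)
    apply (rule exI[of _ 3]; simp)
    apply (rule exI[of _ 4]; simp)
    by (rule exI[of _ 5]; simp)
qed

lemma hd_sym: "hex_pos_dist i j = hex_pos_dist j i" by (simp add: hex_pos_dist_def min.commute)
lemma hd_self: "hex_pos_dist i i = 0" by (simp add: hex_pos_dist_def)

lemma hd_tri1: assumes "x<6" "y<6" shows "hex_pos_dist x (Suc y mod 6) \<le> hex_pos_dist x y + 1"
  using six_cases[OF assms(1)] six_cases[OF assms(2)]
  by (elim disjE; simp add: hex_pos_dist_def)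

lemma hd_tri2: assumes "x<6" "z<6" shows "hex_pos_dist x z \<le> hex_pos_dist x (Suc z mod 6) + 1"
  using six_cases[OF assms(1)] six_cases[OF assms(2)]
  by (elim disjE; simp add: hex_pos_dist_def)

lemma hd_tri: "x<6 \<Longrightarrow> y<6 \<Longrightarrow> z<6 \<Longrightarrow> (y = Suc z mod 6 \<or> z = Suc y mod 6)
  \<Longrightarrow> hex_pos_dist x z \<le> hex_pos_dist x y + 1"
  using hd_tri1 hd_tri2 by blast

lemma hd_step: assumes "x<6" "y<6" "x\<noteq>y" shows
  "\<exists>z<6. (y = Suc z mod 6 \<or> z = Suc y mod 6) \<and> hex_pos_dist x z + 1 = hex_pos_dist x y"
  unfolding ex6
  using six_cases[OF assms(1)] six_cases[OF assms(2)] assms(3)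
  by (elim disjE; simp add: hex_pos_dist_def)

lemma hd_zero: assumes "x<6" "y<6" "hex_pos_dist x y = 0" shows "x = y"
  using six_cases[OF assms(1)] six_cases[OF assms(2)] assms(3)
  by (elim disjE; simp add: hex_pos_dist_def)

lemma sum6: "(\<Sum>r<6. f r) = f 0 + f 1 + f 2 + f 3 + f 4 + f (5::nat)"
  by (simp add: eval_nat_numeral)
lemma hd_sum: assumes "x<6" shows "(\<Sum>r<6. hex_pos_dist r x) = 9"
  unfolding sum6
  using six_cases[OF assms(1)]
  by (elim disjE; simp add: hex_pos_dist_def)

lemma hd_sum2: "x<6 \<Longrightarrow> (\<Sum>r<6. hex_pos_dist x r) = 9"
  using hd_sum[of x] by (simp add: hd_sym)

lemma hd_tri_sum: "(\<Sum>q<6. \<Sum>r<q. hex_pos_dist r q) = 27"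
  unfolding sum6 by (simp add: hex_pos_dist_def lessThan_nat_numeral)

primrec F :: "(nat\<Rightarrow>nat) \<Rightarrow> (nat\<Rightarrow>nat) \<Rightarrow> nat \<Rightarrow> nat \<Rightarrow> nat \<Rightarrow> nat \<Rightarrow> nat" where
  "F c t a x 0 y = hex_pos_dist x y"
| "F c t a x (Suc b) y = (if Suc b \<le> a then hex_pos_dist x y
      else F c t a x b (t (Suc b)) + 1 + hex_pos_dist (c (Suc b)) y)"

lemma F_eq: "F c t a x a y = hex_pos_dist x y" by (cases a) auto

lemma F_right: "a < b \<Longrightarrow> F c t a x b y = F c t a x (b-1) (t b) + 1 + hex_pos_dist (c b) y"
  by (cases b) auto

lemma F_left: "a < b \<Longrightarrow> F c t a x b y = hex_pos_dist x (t (Suc a)) + 1 + F c t (Suc a) (c (Suc a)) b y"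
proof (induction b arbitrary: y)
  case 0 thus ?case by simp
next
  case (Suc b)
  show ?case
  proof (cases "b = a")
    case True thus ?thesis by (simp add: F_eq)
  next
    case False
    hence "a < b" using Suc.prems by simp
    thus ?thesis using Suc.IH[of "t (Suc b)"] by simp
  qed
qed

definition D :: "(nat\<Rightarrow>nat) \<Rightarrow> (nat\<Rightarrow>nat) \<Rightarrow> nat \<Rightarrow> nat \<Rightarrow> nat" where
  "D c t u v = (if u div 6 \<le> v div 6 then F c t (u div 6) (u mod 6) (v div 6) (v mod 6)
     else F c t (v div 6) (v mod 6) (u div 6) (u mod 6))"

lemma D_le: "u div 6 \<le> v div 6 \<Longrightarrow> D c t u v = F c t (u div 6) (u mod 6) (v div 6) (v mod 6)"
  by (simp add: D_def)

lemma D_ge: "v div 6 \<le> u div 6 \<Longrightarrow> D c t u v = F c t (v div 6) (v mod 6) (u div 6) (u mod 6)"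
  by (cases "u div 6 = v div 6") (auto simp: D_def F_eq hd_sym)

lemma dm6: "(x::nat) < 6 \<Longrightarrow> (6*a + x) div 6 = a" "(x::nat) < 6 \<Longrightarrow> (6*a + x) mod 6 = x"
  by auto

lemma D_self: "D c t u u = 0" by (simp add: D_le F_eq hd_self)

lemma D_zero: assumes "D c t u v = 0" shows "u = v"
proof -
  consider "u div 6 < v div 6" | "v div 6 < u div 6" | "u div 6 = v div 6" by linarith
  thus ?thesis
  proof cases
    case 1 thus ?thesis using assms by (simp add: D_le F_right)
  next
    case 2 thus ?thesis using assms by (simp add: D_ge F_right)
  next
    case 3
    hence "hex_pos_dist (u mod 6) (v mod 6) = 0" using assms by (simp add: D_le F_eq)
    hence "u mod 6 = v mod 6" using hd_zero[of "u mod 6" "v mod 6"] by simp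
    thus ?thesis using 3 by (metis div_mult_mod_eq)
  qed
qed

lemma vc_c: "valid_chain n c t \<Longrightarrow> 1 \<le> k \<Longrightarrow> k < n \<Longrightarrow> c k < 6"
  and vc_t: "valid_chain n c t \<Longrightarrow> 1 \<le> k \<Longrightarrow> k < n \<Longrightarrow> t k < 6"
  by (auto simp: valid_chain_def)

lemma D_cut: assumes "1 \<le> k" "t k < 6" "c k < 6"
  shows "D c t u (6*(k-1)+t k) = D c t u (6*k + c k) + 1 \<or> D c t u (6*k + c k) = D c t u (6*(k-1)+t k) + 1"
proof (cases "k \<le> u div 6")
  case True
  have "D c t u (6*k + c k) = F c t k (c k) (u div 6) (u mod 6)"
    using True assms by (simp add: D_ge dm6)
  moreover have "D c t u (6*(k-1)+t k) = F c t (k-1) (t k) (u div 6) (u mod 6)"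
    using True assms by (simp add: D_ge dm6)
  moreover have "F c t (k-1) (t k) (u div 6) (u mod 6) = 1 + F c t k (c k) (u div 6) (u mod 6)"
    using F_left[of "k-1" "u div 6" c t "t k" "u mod 6"] True assms by (simp add: hd_self)
  ultimately show ?thesis by simp
next
  case False
  have "D c t u (6*k + c k) = F c t (u div 6) (u mod 6) k (c k)"
    using False assms by (simp add: D_le dm6)
  moreover have "D c t u (6*(k-1)+t k) = F c t (u div 6) (u mod 6) (k-1) (t k)"
    using False assms by (simp add: D_le dm6)
  moreover have "F c t (u div 6) (u mod 6) k (c k) = F c t (u div 6) (u mod 6) (k-1) (t k) + 1"
    using F_right[of "u div 6" k c t "u mod 6" "c k"] False by (simp add: hd_self)
  ultimately show ?thesis by simp
qed

lemma D_adj: assumes vc: "valid_chain n c t" and un: "u < 6*n" and adj: "chain_adj n c t x y"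
  shows "D c t u y \<le> D c t u x + 1"
proof -
  have xy: "x < 6*n" "y < 6*n" using adj by (auto simp: chain_adj_def)
  from adj consider (same) "x div 6 = y div 6" "x mod 6 = Suc (y mod 6) mod 6 \<or> y mod 6 = Suc (x mod 6) mod 6"
    | (cut) k where "1 \<le> k" "k < n" "{x, y} = {6*(k-1) + t k, 6*k + c k}"
    unfolding chain_adj_def by blast
  thus ?thesis
  proof cases
    case same
    define h where "h = x div 6"
    have hn: "h < n" using xy h_def by auto
    have cyc: "x mod 6 = Suc (y mod 6) mod 6 \<or> y mod 6 = Suc (x mod 6) mod 6" using same by blast
    consider "h = u div 6" | "u div 6 < h" | "h < u div 6" by linarith
    thus ?thesis
    proof cases
      case 1
      thus ?thesis using same h_def hd_tri[OF _ _ _ cyc, of "u mod 6"] by (simp add: D_le F_eq)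
    next
      case 2
      have c6: "c h < 6" using vc_c[OF vc _ hn] 2 by simp
      show ?thesis using 2 same h_def hd_tri[OF c6 _ _ cyc]
        by (simp add: D_le F_right)
    next
      case 3
      have "u div 6 < n" using un by auto
      hence t6: "t (Suc h) < 6" using vc_t[OF vc, of "Suc h"] 3 by simp
      have "hex_pos_dist (t (Suc h)) (y mod 6) \<le> hex_pos_dist (t (Suc h)) (x mod 6) + 1"
        using hd_tri[OF t6 _ _ cyc] by simp
      thus ?thesis using 3 same h_def
        by (simp add: D_ge F_left hd_sym)
    qed
  next
    case cut
    have "D c t u (6*(k-1)+t k) = D c t u (6*k + c k) + 1 \<or> D c t u (6*k + c k) = D c t u (6*(k-1)+t k) + 1"
      using D_cut[where k=k and t=t and c=c and u=u, OF cut(1) vc_t[OF vc cut(1,2)] vc_c[OF vc cut(1,2)]] .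
    moreover have "(x = 6*(k-1) + t k \<and> y = 6*k + c k) \<or> (y = 6*(k-1) + t k \<and> x = 6*k + c k)"
      using cut(3) by (auto simp: doubleton_eq_iff)
    ultimately show ?thesis by (elim disjE conjE) simp_all
  qed
qed



lemma adj_same: assumes "b < n" "z < 6" "w < 6" "w = Suc z mod 6 \<or> z = Suc w mod 6"
  shows "chain_adj n c t (6*b+z) (6*b+w)"
proof -
  have "6*b+z < 6*n" "6*b+w < 6*n" using assms by auto
  moreover have "(6*b+z) div 6 = (6*b+w) div 6" using assms by (simp add: dm6)
  moreover have "(6*b+z) mod 6 = Suc ((6*b+w) mod 6) mod 6 \<or> (6*b+w) mod 6 = Suc ((6*b+z) mod 6) mod 6"
    using assms by (auto simp: dm6)
  ultimately show ?thesis unfolding chain_adj_def by blast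
qed

lemma adj_cut: assumes "1 \<le> k" "k < n" "t k < 6" "c k < 6"
  shows "chain_adj n c t (6*(k-1)+t k) (6*k+c k)" "chain_adj n c t (6*k+c k) (6*(k-1)+t k)"
proof -
  have b: "6*(k-1)+t k < 6*n" "6*k+c k < 6*n" using assms by auto
  have "\<exists>k'. 1 \<le> k' \<and> k' < n \<and> {6*(k-1)+t k, 6*k+c k} = {6*(k'-1) + t k', 6*k' + c k'}"
    using assms by blast
  thus "chain_adj n c t (6*(k-1)+t k) (6*k+c k)" using b unfolding chain_adj_def by blast
  have "\<exists>k'. 1 \<le> k' \<and> k' < n \<and> {6*k+c k, 6*(k-1)+t k} = {6*(k'-1) + t k', 6*k' + c k'}"
    using assms by (intro exI[of _ k]) (simp add: insert_commute)
  thus "chain_adj n c t (6*k+c k) (6*(k-1)+t k)" using b unfolding chain_adj_def by blast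
qed

lemma D_step: assumes vc: "valid_chain n c t" and un: "u < 6*n" and vn: "v < 6*n" and ne: "u \<noteq> v"
  shows "\<exists>y. chain_adj n c t y v \<and> D c t u y + 1 = D c t u v"
proof -
  define a where "a = u div 6"
  define b where "b = v div 6"
  define pu where "pu = u mod 6"
  define pv where "pv = v mod 6"
  have an: "a < n" and bn: "b < n" using un vn a_def b_def by auto
  have pv6: "pv < 6" and pu6: "pu < 6" using pv_def pu_def by auto
  have v_eq: "v = 6*b + pv" using b_def pv_def by simp
  have ad: "u div 6 = a" "u mod 6 = pu" "v div 6 = b" "v mod 6 = pv"
    using a_def b_def pu_def pv_def by simp_all
  consider "a = b" | "a < b" | "b < a" by linarith
  thus ?thesis
  proof cases
    case 1
    hence "pu \<noteq> pv" using ne a_def b_def pu_def pv_def by (metis div_mult_mod_eq)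
    then obtain z where z: "z < 6" "pv = Suc z mod 6 \<or> z = Suc pv mod 6"
      "hex_pos_dist pu z + 1 = hex_pos_dist pu pv"
      using hd_step[OF pu6 pv6] by blast
    define y where "y = 6*b + z"
    have "chain_adj n c t y v"
      using adj_same[OF bn z(1) pv6] z(2) y_def v_eq by auto
    moreover have "D c t u y + 1 = D c t u v"
      using 1 z y_def ad pv6 by (simp add: D_le dm6 F_eq)
    ultimately show ?thesis by blast
  next
    case 2
    have b1: "1 \<le> b" using 2 by simp
    have c6: "c b < 6" and t6: "t b < 6" using vc_c[OF vc b1 bn] vc_t[OF vc b1 bn] by auto
    have Dv: "D c t u v = F c t a pu (b-1) (t b) + 1 + hex_pos_dist (c b) pv"
      using 2 ad by (simp add: D_le F_right)
    show ?thesis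
    proof (cases "pv = c b")
      case True
      define y where "y = 6*(b-1) + t b"
      have "chain_adj n c t y v"
        using adj_cut(1)[where k=b and n=n and t=t and c=c, OF b1 bn t6 c6] True y_def v_eq by simp
      moreover have "D c t u y = F c t a pu (b-1) (t b)"
        using 2 y_def t6 ad by (simp add: D_le dm6)
      ultimately show ?thesis using Dv True hd_self by auto
    next
      case False
      then obtain z where z: "z < 6" "pv = Suc z mod 6 \<or> z = Suc pv mod 6"
        "hex_pos_dist (c b) z + 1 = hex_pos_dist (c b) pv"
        using hd_step[OF c6 pv6] by blast
      define y where "y = 6*b + z"
      have "chain_adj n c t y v"
        using adj_same[OF bn z(1) pv6] z(2) y_def v_eq by auto
      moreover have "D c t u y = F c t a pu (b-1) (t b) + 1 + hex_pos_dist (c b) z"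
        using 2 y_def z ad by (simp add: D_le F_right dm6)
      ultimately show ?thesis using Dv z by auto
    qed
  next
    case 3
    have b1: "1 \<le> Suc b" "Suc b < n" using 3 an by auto
    have c6: "c (Suc b) < 6" and t6: "t (Suc b) < 6" using vc_c[OF vc b1] vc_t[OF vc b1] by auto
    have Dv: "D c t u v = hex_pos_dist (t (Suc b)) pv + 1 + F c t (Suc b) (c (Suc b)) a pu"
      using 3 ad by (simp add: D_ge F_left hd_sym)
    show ?thesis
    proof (cases "pv = t (Suc b)")
      case True
      define y where "y = 6*(Suc b) + c (Suc b)"
      have "chain_adj n c t y v"
        using adj_cut(2)[where k="Suc b" and n=n and t=t and c=c, OF b1 t6 c6] True y_def v_eq by simp
      moreover have "D c t u y = F c t (Suc b) (c (Suc b)) a pu"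
      proof -
        have "y div 6 = Suc b" "y mod 6 = c (Suc b)" using y_def dm6[OF c6, of "Suc b"] by simp_all
        thus ?thesis using 3 ad by (simp add: D_ge)
      qed
      ultimately show ?thesis using Dv True hd_self by auto
    next
      case False
      then obtain z where z: "z < 6" "pv = Suc z mod 6 \<or> z = Suc pv mod 6"
        "hex_pos_dist (t (Suc b)) z + 1 = hex_pos_dist (t (Suc b)) pv"
        using hd_step[OF t6 pv6] by blast
      define y where "y = 6*b + z"
      have "chain_adj n c t y v"
        using adj_same[OF bn z(1) pv6] z(2) y_def v_eq by auto
      moreover have "D c t u y = hex_pos_dist (t (Suc b)) z + 1 + F c t (Suc b) (c (Suc b)) a pu"
        using 3 y_def z ad by (simp add: D_ge F_left dm6 hd_sym)
      ultimately show ?thesis using Dv z by auto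
    qed
  qed
qed

lemma walk_lower: assumes vc: "valid_chain n c t" and un: "u < 6*n"
  and w: "is_walk (chain_adj n c t) p u v"
  shows "D c t u v + 1 \<le> length p"
proof -
  have ne: "p \<noteq> []" and h: "hd p = u" and l: "last p = v"
    and st: "\<And>i. Suc i < length p \<Longrightarrow> chain_adj n c t (p ! i) (p ! Suc i)"
    using w by (auto simp: is_walk_def)
  have "\<forall>i. i < length p \<longrightarrow> D c t u (p ! i) \<le> i"
  proof (intro allI)
    fix i show "i < length p \<longrightarrow> D c t u (p ! i) \<le> i"
    proof (induction i)
      case 0 show ?case using ne h by (simp add: hd_conv_nth[symmetric] D_self)
    next
      case (Suc i)
      show ?case
      proof
        assume "Suc i < length p"
        hence "D c t u (p ! Suc i) \<le> D c t u (p ! i) + 1" using D_adj[OF vc un st] by blast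
        thus "D c t u (p ! Suc i) \<le> Suc i" using Suc.IH \<open>Suc i < length p\<close> by simp
      qed
    qed
  qed
  hence "D c t u (p ! (length p - 1)) \<le> length p - 1" using ne by simp
  hence "D c t u v \<le> length p - 1" using ne l by (simp add: last_conv_nth)
  thus ?thesis using ne by (cases p) auto
qed

lemma walk_snoc: assumes "is_walk adj p u y" "adj y v" shows "is_walk adj (p @ [v]) u v"
proof -
  have ne: "p \<noteq> []" and h: "hd p = u" and l: "last p = y"
    and st: "\<And>i. Suc i < length p \<Longrightarrow> adj (p ! i) (p ! Suc i)"
    using assms(1) by (auto simp: is_walk_def)
  have "adj ((p @ [v]) ! i) ((p @ [v]) ! Suc i)" if "Suc i < length (p @ [v])" for i
  proof (cases "Suc i < length p")
    case True thus ?thesis using st[OF True] by (simp add: nth_append)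
  next
    case False
    hence "i = length p - 1" using that by simp
    thus ?thesis using ne l assms(2) by (simp add: nth_append last_conv_nth)
  qed
  thus ?thesis using ne h by (simp add: is_walk_def)
qed

lemma walk_upper: assumes vc: "valid_chain n c t" and un: "u < 6*n"
  shows "v < 6*n \<Longrightarrow> \<exists>p. is_walk (chain_adj n c t) p u v \<and> length p = Suc (D c t u v)"
proof (induction "D c t u v" arbitrary: v)
  case 0
  hence "D c t u v = 0" by simp
  hence "v = u" using D_zero[of c t u v] by simp
  thus ?case using D_self[of c t u] by (intro exI[of _ "[u]"]) (simp add: is_walk_def)
next
  case (Suc m)
  hence "u \<noteq> v" using D_self[of c t u] by auto
  then obtain y where y: "chain_adj n c t y v" "D c t u y + 1 = D c t u v"
    using D_step[OF vc un Suc.prems] by blast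
  have "y < 6*n" using y(1) by (simp add: chain_adj_def)
  then obtain p where p: "is_walk (chain_adj n c t) p u y" "length p = Suc (D c t u y)"
    using Suc.hyps(1)[of y] y(2) Suc.hyps(2) by auto
  show ?case using walk_snoc[OF p(1) y(1)] p(2) y(2) by (intro exI[of _ "p @ [v]"]) simp
qed

lemma graph_dist_D: assumes vc: "valid_chain n c t" and un: "u < 6*n" and vn: "v < 6*n"
  shows "graph_dist (chain_adj n c t) u v = D c t u v"
  unfolding graph_dist_def
proof (rule Least_equality)
  show "\<exists>p. is_walk (chain_adj n c t) p u v \<and> length p = Suc (D c t u v)"
    using walk_upper[OF vc un vn] .
next
  fix m assume "\<exists>p. is_walk (chain_adj n c t) p u v \<and> length p = Suc m"
  thus "D c t u v \<le> m" using walk_lower[OF vc un] by fastforce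
qed



lemma pair_sum: "(\<Sum>(u, v) \<in> {(u, v). u < v \<and> v < (N::nat)}. f u v) = (\<Sum>v<N. \<Sum>u<v. (f u v :: nat))"
proof (induction N)
  case 0 thus ?case by simp
next
  case (Suc N)
  have eq: "{(u, v). u < v \<and> v < Suc N} = {(u, v). u < v \<and> v < N} \<union> (\<lambda>u. (u, N)) ` {..<N}"
    by auto
  have fin: "finite {(u, v). u < v \<and> v < (N::nat)}"
    by (rule finite_subset[of _ "{..<N} \<times> {..<N}"]) auto
  have disj: "{(u, v). u < v \<and> v < N} \<inter> (\<lambda>u. (u, N)) ` {..<N} = {}" by auto
  have inj: "inj_on (\<lambda>u. (u, N)) {..<N}" by (auto simp: inj_on_def)
  have "(\<Sum>(u, v) \<in> {(u, v). u < v \<and> v < Suc N}. f u v)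
      = (\<Sum>(u, v) \<in> {(u, v). u < v \<and> v < N}. f u v) + (\<Sum>(u, v) \<in> (\<lambda>u. (u, N)) ` {..<N}. f u v)"
    unfolding eq by (rule sum.union_disjoint[OF fin _ disj]) simp
  also have "(\<Sum>(u, v) \<in> (\<lambda>u. (u, N)) ` {..<N}. f u v) = (\<Sum>u<N. f u N)"
    by (simp add: sum.reindex[OF inj])
  finally show ?case using Suc.IH by simp
qed

lemma wiener_D: assumes vc: "valid_chain n c t"
  shows "wiener n c t = (\<Sum>v<6*n. \<Sum>u<v. D c t u v)"
proof -
  have "wiener n c t = (\<Sum>(u, v) \<in> {(u, v). u < v \<and> v < 6*n}. D c t u v)"
    unfolding wiener_def by (rule sum.cong) (auto simp: graph_dist_D[OF vc])
  thus ?thesis by (simp add: pair_sum)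
qed

lemma sum_split: "(\<Sum>v<(a::nat)+b. f v) = (\<Sum>v<a. f v) + (\<Sum>q<b. f (a+q))"
  by (induction b) (simp_all add: add.assoc)

lemma sum_aux: "(\<Sum>u<(N::nat). g u + 1 + h) = (\<Sum>u<N. g u) + N + N*(h::nat)"
  unfolding sum.distrib by simp

definition S :: "(nat\<Rightarrow>nat) \<Rightarrow> (nat\<Rightarrow>nat) \<Rightarrow> nat \<Rightarrow> nat" where
  "S c t m = (\<Sum>v<6*m. \<Sum>u<v. D c t u v)"
definition Y :: "(nat\<Rightarrow>nat) \<Rightarrow> (nat\<Rightarrow>nat) \<Rightarrow> nat \<Rightarrow> nat" where
  "Y c t m = (\<Sum>u<6*m. D c t u (6*(m-1) + t m))"

lemma D_next: assumes "1 \<le> m" "u < 6*m" "t m < 6" "x < 6"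
  shows "D c t u (6*m+x) = D c t u (6*(m-1) + t m) + 1 + hex_pos_dist (c m) x"
proof -
  have a: "u div 6 < m" using assms by auto
  have e1: "(6*m+x) div 6 = m" "(6*m+x) mod 6 = x" using assms(4) by (simp_all add: dm6)
  have e2: "(6*(m-1) + t m) div 6 = m - 1" "(6*(m-1) + t m) mod 6 = t m" using assms(3) by (simp_all add: dm6)
  have "D c t u (6*m+x) = F c t (u div 6) (u mod 6) m x" using a e1 by (simp add: D_le)
  also have "\<dots> = F c t (u div 6) (u mod 6) (m-1) (t m) + 1 + hex_pos_dist (c m) x"
    using a by (rule F_right)
  also have "F c t (u div 6) (u mod 6) (m-1) (t m) = D c t u (6*(m-1) + t m)"
    using a e2 by (simp add: D_le)
  finally show ?thesis .
qed

lemma D_same: "r<6 \<Longrightarrow> q<6 \<Longrightarrow> D c t (6*m+r) (6*m+q) = hex_pos_dist r q"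
  by (simp add: D_le dm6 F_eq)

lemma inner_sum: assumes "1 \<le> m" "t m < 6" "c m < 6"
  shows "(\<Sum>q<6. \<Sum>u<6*m+q. D c t u (6*m+q)) = 6 * Y c t m + 90*m + 27"
proof -
  have A: "(\<Sum>u<6*m+q. D c t u (6*m+q)) = (Y c t m + 6*m + 6*m*hex_pos_dist (c m) q) + (\<Sum>r<q. hex_pos_dist r q)"
    if q: "q < 6" for q
  proof -
    have "(\<Sum>u<6*m+q. D c t u (6*m+q)) = (\<Sum>u<6*m. D c t u (6*m+q)) + (\<Sum>r<q. D c t (6*m+r) (6*m+q))"
      by (rule sum_split)
    also have "(\<Sum>r<q. D c t (6*m+r) (6*m+q)) = (\<Sum>r<q. hex_pos_dist r q)"
      by (rule sum.cong) (use q in \<open>auto simp: D_same\<close>)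
    also have "(\<Sum>u<6*m. D c t u (6*m+q)) = (\<Sum>u<6*m. D c t u (6*(m-1) + t m) + 1 + hex_pos_dist (c m) q)"
      by (rule sum.cong) (use q assms in \<open>auto simp: D_next\<close>)
    also have "\<dots> = Y c t m + 6*m + 6*m*hex_pos_dist (c m) q"
      unfolding Y_def by (rule sum_aux)
    finally show ?thesis .
  qed
  have "(\<Sum>q<6. \<Sum>u<6*m+q. D c t u (6*m+q))
      = (\<Sum>q<6. (Y c t m + 6*m + 6*m*hex_pos_dist (c m) q) + (\<Sum>r<q. hex_pos_dist r q))"
    by (rule sum.cong) (auto simp: A)
  also have "\<dots> = 6 * Y c t m + 36*m + 6*m*(\<Sum>q<6. hex_pos_dist (c m) q) + 27"
    by (simp add: sum.distrib sum_distrib_left hd_tri_sum)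
  also have "\<dots> = 6 * Y c t m + 90*m + 27" using hd_sum2[OF assms(3)] by simp
  finally show ?thesis .
qed

lemma Y1: "t 1 < 6 \<Longrightarrow> Y c t 1 = 9"
proof -
  assume t6: "t 1 < 6"
  have "Y c t 1 = (\<Sum>u<6. D c t (6*0+u) (6*0 + t 1))" by (simp add: Y_def)
  also have "\<dots> = (\<Sum>u<6. hex_pos_dist u (t 1))"
    by (rule sum.cong) (use t6 in \<open>auto simp: D_le F_eq\<close>)
  finally show ?thesis using hd_sum[OF t6] by simp
qed

lemma Y_rec: assumes "1 \<le> j" "t (Suc j) < 6" "t j < 6"
  shows "Y c t (Suc j) = Y c t j + 6*j*(1 + hex_pos_dist (c j) (t (Suc j))) + 9"
proof -
  have "Y c t (Suc j) = (\<Sum>u<6*j+6. D c t u (6*j + t (Suc j)))" by (simp add: Y_def add.commute)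
  also have "\<dots> = (\<Sum>u<6*j. D c t u (6*j + t (Suc j))) + (\<Sum>q<6. D c t (6*j+q) (6*j + t (Suc j)))"
    by (rule sum_split)
  also have "(\<Sum>q<6. D c t (6*j+q) (6*j + t (Suc j))) = (\<Sum>q<6. hex_pos_dist q (t (Suc j)))"
    by (rule sum.cong) (use assms in \<open>auto simp: D_same\<close>)
  also have "\<dots> = 9" using hd_sum[OF assms(2)] .
  also have "(\<Sum>u<6*j. D c t u (6*j + t (Suc j)))
      = (\<Sum>u<6*j. D c t u (6*(j-1) + t j) + 1 + hex_pos_dist (c j) (t (Suc j)))"
    by (rule sum.cong) (use assms in \<open>auto simp: D_next\<close>)
  also have "\<dots> = Y c t j + 6*j*(1 + hex_pos_dist (c j) (t (Suc j)))"
    by (subst sum_aux) (simp add: Y_def algebra_simps)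
  finally show ?thesis .
qed

lemma Y_closed: assumes vc: "valid_chain n c t" and ct: "chain_type d n c t"
  shows "1 \<le> m \<Longrightarrow> m < n \<Longrightarrow> int (Y c t m) = 9*int m + 3*(1+int d)*int m*(int m - 1)"
proof (induction m)
  case 0 thus ?case by simp
next
  case (Suc j)
  show ?case
  proof (cases "j = 0")
    case True
    have "t 1 < 6" using vc_t[OF vc, of 1] Suc.prems by simp
    thus ?thesis using True Y1[of t c] by simp
  next
    case False
    hence j1: "1 \<le> j" by simp
    have t1: "t (Suc j) < 6" using vc_t[OF vc, of "Suc j"] Suc.prems by simp
    have t2: "t j < 6" using vc_t[OF vc, of j] Suc.prems j1 by simp
    have hd: "hex_pos_dist (c j) (t (Suc j)) = d"
      using ct[unfolded chain_type_def, rule_format, of "Suc j"] Suc.prems j1 by (simp add: hd_sym)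
    have IH: "int (Y c t j) = 9*int j + 3*(1+int d)*int j*(int j - 1)" using Suc.IH j1 Suc.prems by simp
    have "int (Y c t (Suc j)) = int (Y c t j) + 6*int j*(1 + int d) + 9"
      using Y_rec[OF j1 t1 t2, of c] hd by (simp add: algebra_simps)
    thus ?thesis using IH by (simp add: algebra_simps)
  qed
qed

lemma S_closed: assumes vc: "valid_chain n c t" and ct: "chain_type d n c t"
  shows "m \<le> n \<Longrightarrow> int (S c t m) = 27*int m + 72*int m*(int m - 1) + 6*(int d+1)*int m*(int m - 1)*(int m - 2)"
proof (induction m)
  case 0 thus ?case by (simp add: S_def)
next
  case (Suc j)
  have "S c t (Suc j) = (\<Sum>v<6*j+6. \<Sum>u<v. D c t u v)" by (simp add: S_def add.commute)
  also have "\<dots> = S c t j + (\<Sum>q<6. \<Sum>u<6*j+q. D c t u (6*j+q))"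
    unfolding S_def by (rule sum_split)
  finally have eq: "S c t (Suc j) = S c t j + (\<Sum>q<6. \<Sum>u<6*j+q. D c t u (6*j+q))" .
  have IH: "int (S c t j) = 27*int j + 72*int j*(int j - 1) + 6*(int d+1)*int j*(int j - 1)*(int j - 2)"
    using Suc by simp
  show ?case
  proof (cases "j = 0")
    case True
    have "(\<Sum>q<6. \<Sum>u<6*j+q. D c t u (6*j+q)) = (\<Sum>q<6. \<Sum>u<q. hex_pos_dist u q)"
    proof (rule sum.cong)
      fix q assume "q \<in> {..<6::nat}"
      thus "(\<Sum>u<6*j+q. D c t u (6*j+q)) = (\<Sum>u<q. hex_pos_dist u q)"
        using True D_same[of _ _ c t 0] by (auto intro!: sum.cong)
    qed simp
    thus ?thesis using eq IH True hd_tri_sum by simp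
  next
    case False
    hence j1: "1 \<le> j" and jn: "j < n" using Suc.prems by auto
    have "int (S c t (Suc j)) = int (S c t j) + 6 * int (Y c t j) + 90*int j + 27"
      using eq inner_sum[where m=j and t=t and c=c, OF j1 vc_t[OF vc j1 jn] vc_c[OF vc j1 jn]] by simp
    thus ?thesis using IH Y_closed[OF vc ct j1 jn] by (simp add: algebra_simps)
  qed
qed

theorem corollary3p3:
  fixes n :: nat and c t :: "nat \<Rightarrow> nat"
  assumes "n \<ge> 1" and "valid_chain n c t"
  shows "(chain_type 1 n c t \<longrightarrow>
            int (wiener n c t) = 12 * int n ^ 3 + 36 * int n ^ 2 - 21 * int n)
       \<and> (chain_type 2 n c t \<longrightarrow>
            int (wiener n c t) = 18 * int n ^ 3 + 18 * int n ^ 2 - 9 * int n)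
       \<and> (chain_type 3 n c t \<longrightarrow>
            int (wiener n c t) = 24 * int n ^ 3 + 3 * int n)"
proof -
  have W: "wiener n c t = S c t n" using wiener_D[OF assms(2)] by (simp add: S_def)
  have gen: "int (wiener n c t) = 27*int n + 72*int n*(int n - 1) + 6*(int d+1)*int n*(int n - 1)*(int n - 2)"
    if "chain_type d n c t" for d
    using S_closed[OF assms(2) that, of n] W by simp
  show ?thesis
    using gen[of 1] gen[of 2] gen[of 3] by (simp add: power2_eq_square power3_eq_cube algebra_simps)
qed

end
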